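(* Let $\epsilon>0$ and let $\mathcal V=\{s_L(1+\epsilon)^\ell:0\le\ell\le k\}$. For every instance of problem MR there is a feasible schedule in which every task runs at a speed belonging to $\mathcal V$ and whose objective value $\sum_j w_jC_j$ is at most $(1+\epsilon)$ times the optimal objective value of the instance.
   Context: Problem MR. There are jobs $\mathcal J=\{1,\dots,n\}$ and processors $\mathcal P=\{1,\dots,m\}$. Job $j$ has weight $w_j>0$, release date $r_j\ge0$, and a nonempty set of Map tasks and a nonempty set of Reduce tasks, preassigned to processors with at most one task of each job per processor; $T_{i,j}$ is the task of job $j$ on processor $i$, with work $v_{i,j}\ge0$; $\mathcal T$ is the set of all tasks. A schedule gives each task a start time and a constant speed $s_{i,j}>0$; the task runs non-preemptively for $v_{i,j}/s_{i,j}$ time units and uses energy $v_{i,j}s_{i,j}^{\beta-1}$, where $\beta>1$ is a fixed constant. Feasibility: each processor runs at most one task at a time; tasks of job $j$ start no earlier than $r_j$; Reduce tasks of job $j$ start only after all Map tasks of job $j$ complete; total energy at most a given budget $E>0$. $C_j$ is the maximum completion time of the tasks of job $j$; the objective is to minimize $\sum_j w_jC_j$. Notation: $w_{\min},w_{\max}$ are the min/max weights, $r_{\max}=\max_j r_j$, $v_{\max}=\max v_{i,j}$, $v_{\min}=\min\{v_{i,j}:v_{i,j}>0\}$, $t_{\max}=\frac{w_{\max}}{w_{\min}}\big(nr_{\max}+n(n+1)(|\mathcal T|v_{\max}^\beta/E)^{1/(\beta-1)}\big)$, $s_L=v_{\min}/t_{\max}$, $s_U=(E/v_{\min})^{1/(\beta-1)}$,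 and $k=\lceil\log_{1+\epsilon}(s_U/s_L)\rceil$. *)

theory Defs
  imports Complex_Main
begin

text \<open>Jobs are 0..<n, processors 0..<m. Job j has Map tasks on the
processors in Mp j and Reduce tasks on the processors in Rd j (disjoint, so at
most one task of each job per processor). Task (i,j) has work v i j.\<close>

definition tasks :: "nat \<Rightarrow> (nat \<Rightarrow> nat set) \<Rightarrow> (nat \<Rightarrow> nat set) \<Rightarrow> (nat \<times> nat) set" where
  "tasks n Mp Rd = {(i, j). j < n \<and> i \<in> Mp j \<union> Rd j}"

definition mr_instance ::
  "nat \<Rightarrow> nat \<Rightarrow> (nat \<Rightarrow> nat set) \<Rightarrow> (nat \<Rightarrow> nat set) \<Rightarrow> (nat \<Rightarrow> real) \<Rightarrow> (nat \<Rightarrow> real)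
    \<Rightarrow> (nat \<Rightarrow> nat \<Rightarrow> real) \<Rightarrow> real \<Rightarrow> real \<Rightarrow> bool" where
  "mr_instance n m Mp Rd w r v \<beta> E \<longleftrightarrow>
     \<beta> > 1 \<and> E > 0 \<and>
     (\<forall>j<n. w j > 0 \<and> r j \<ge> 0 \<and> Mp j \<noteq> {} \<and> Rd j \<noteq> {} \<and>
            Mp j \<subseteq> {..<m} \<and> Rd j \<subseteq> {..<m} \<and> Mp j \<inter> Rd j = {}) \<and>
     (\<forall>(i, j) \<in> tasks n Mp Rd. v i j \<ge> 0)"

definition task_completion ::
  "(nat \<Rightarrow> nat \<Rightarrow> real) \<Rightarrow> (nat \<Rightarrow> nat \<Rightarrow> real) \<Rightarrow> (nat \<Rightarrow> nat \<Rightarrow> real) \<Rightarrow> nat \<Rightarrow> nat \<Rightarrow> real" where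
  "task_completion v S sp i j = S i j + v i j / sp i j"

definition feasible ::
  "nat \<Rightarrow> (nat \<Rightarrow> nat set) \<Rightarrow> (nat \<Rightarrow> nat set) \<Rightarrow> (nat \<Rightarrow> real)
    \<Rightarrow> (nat \<Rightarrow> nat \<Rightarrow> real) \<Rightarrow> real \<Rightarrow> real
    \<Rightarrow> (nat \<Rightarrow> nat \<Rightarrow> real) \<Rightarrow> (nat \<Rightarrow> nat \<Rightarrow> real) \<Rightarrow> bool" where
  "feasible n Mp Rd r v \<beta> E S sp \<longleftrightarrow>
     (\<forall>(i, j) \<in> tasks n Mp Rd. sp i j > 0 \<and> S i j \<ge> r j) \<and>
     (\<forall>(i, j) \<in> tasks n Mp Rd. \<forall>(i', j') \<in> tasks n Mp Rd. i = i' \<and> j \<noteq> j' \<longrightarrow>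
        task_completion v S sp i j \<le> S i j' \<or> task_completion v S sp i j' \<le> S i j) \<and>
     (\<forall>j<n. \<forall>i \<in> Rd j. \<forall>i' \<in> Mp j. S i j \<ge> task_completion v S sp i' j) \<and>
     (\<Sum>(i, j) \<in> tasks n Mp Rd. v i j * sp i j powr (\<beta> - 1)) \<le> E"

definition job_completion ::
  "(nat \<Rightarrow> nat set) \<Rightarrow> (nat \<Rightarrow> nat set) \<Rightarrow> (nat \<Rightarrow> nat \<Rightarrow> real)
    \<Rightarrow> (nat \<Rightarrow> nat \<Rightarrow> real) \<Rightarrow> (nat \<Rightarrow> nat \<Rightarrow> real) \<Rightarrow> nat \<Rightarrow> real" where
  "job_completion Mp Rd v S sp j = Max ((\<lambda>i. task_completion v S sp i j) ` (Mp j \<union> Rd j))"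

definition objective ::
  "nat \<Rightarrow> (nat \<Rightarrow> nat set) \<Rightarrow> (nat \<Rightarrow> nat set) \<Rightarrow> (nat \<Rightarrow> real) \<Rightarrow> (nat \<Rightarrow> nat \<Rightarrow> real)
    \<Rightarrow> (nat \<Rightarrow> nat \<Rightarrow> real) \<Rightarrow> (nat \<Rightarrow> nat \<Rightarrow> real) \<Rightarrow> real" where
  "objective n Mp Rd w v S sp = (\<Sum>j<n. w j * job_completion Mp Rd v S sp j)"

definition opt_value ::
  "nat \<Rightarrow> (nat \<Rightarrow> nat set) \<Rightarrow> (nat \<Rightarrow> nat set) \<Rightarrow> (nat \<Rightarrow> real) \<Rightarrow> (nat \<Rightarrow> real)
    \<Rightarrow> (nat \<Rightarrow> nat \<Rightarrow> real) \<Rightarrow> real \<Rightarrow> real \<Rightarrow> real" where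
  "opt_value n Mp Rd w r v \<beta> E =
     Inf {objective n Mp Rd w v S sp | S sp. feasible n Mp Rd r v \<beta> E S sp}"

definition t_max ::
  "nat \<Rightarrow> (nat \<Rightarrow> nat set) \<Rightarrow> (nat \<Rightarrow> nat set) \<Rightarrow> (nat \<Rightarrow> real) \<Rightarrow> (nat \<Rightarrow> real)
    \<Rightarrow> (nat \<Rightarrow> nat \<Rightarrow> real) \<Rightarrow> real \<Rightarrow> real \<Rightarrow> real" where
  "t_max n Mp Rd w r v \<beta> E =
    (let wmin = Min (w ` {..<n}); wmax = Max (w ` {..<n}); rmax = Max (r ` {..<n});
         vmax = Max ((\<lambda>(i, j). v i j) ` tasks n Mp Rd);
         T = real (card (tasks n Mp Rd))
     in wmax / wmin * (real n * rmax
          + real n * (real n + 1) * (T * vmax powr \<beta> / E) powr (1 / (\<beta> - 1))))"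

definition v_min :: "nat \<Rightarrow> (nat \<Rightarrow> nat set) \<Rightarrow> (nat \<Rightarrow> nat set) \<Rightarrow> (nat \<Rightarrow> nat \<Rightarrow> real) \<Rightarrow> real" where
  "v_min n Mp Rd v = Min {v i j | i j. (i, j) \<in> tasks n Mp Rd \<and> v i j > 0}"

definition s_L ::
  "nat \<Rightarrow> (nat \<Rightarrow> nat set) \<Rightarrow> (nat \<Rightarrow> nat set) \<Rightarrow> (nat \<Rightarrow> real) \<Rightarrow> (nat \<Rightarrow> real)
    \<Rightarrow> (nat \<Rightarrow> nat \<Rightarrow> real) \<Rightarrow> real \<Rightarrow> real \<Rightarrow> real" where
  "s_L n Mp Rd w r v \<beta> E = v_min n Mp Rd v / t_max n Mp Rd w r v \<beta> E"

definition s_U :: "nat \<Rightarrow> (nat \<Rightarrow> nat set) \<Rightarrow> (nat \<Rightarrow> nat set) \<Rightarrow> (nat \<Rightarrow> nat \<Rightarrow> real) \<Rightarrow> real \<Rightarrow> real \<Rightarrow> real" where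
  "s_U n Mp Rd v \<beta> E = (E / v_min n Mp Rd v) powr (1 / (\<beta> - 1))"

definition k_param ::
  "real \<Rightarrow> nat \<Rightarrow> (nat \<Rightarrow> nat set) \<Rightarrow> (nat \<Rightarrow> nat set) \<Rightarrow> (nat \<Rightarrow> real) \<Rightarrow> (nat \<Rightarrow> real)
    \<Rightarrow> (nat \<Rightarrow> nat \<Rightarrow> real) \<Rightarrow> real \<Rightarrow> real \<Rightarrow> int" where
  "k_param \<epsilon> n Mp Rd w r v \<beta> E =
     \<lceil>log (1 + \<epsilon>) (s_U n Mp Rd v \<beta> E / s_L n Mp Rd w r v \<beta> E)\<rceil>"

definition speed_set ::
  "real \<Rightarrow> nat \<Rightarrow> (nat \<Rightarrow> nat set) \<Rightarrow> (nat \<Rightarrow> nat set) \<Rightarrow> (nat \<Rightarrow> real) \<Rightarrow> (nat \<Rightarrow> real)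
    \<Rightarrow> (nat \<Rightarrow> nat \<Rightarrow> real) \<Rightarrow> real \<Rightarrow> real \<Rightarrow> real set" where
  "speed_set \<epsilon> n Mp Rd w r v \<beta> E =
     {s_L n Mp Rd w r v \<beta> E * (1 + \<epsilon>) ^ l | l :: nat. int l \<le> k_param \<epsilon> n Mp Rd w r v \<beta> E}"

end

theory Submission
  imports Defs
begin



lemma finite_bolzano:
  fixes f :: "nat \<Rightarrow> 'a \<Rightarrow> real"
  assumes "finite A" and "\<And>n x. x \<in> A \<Longrightarrow> \<bar>f n x\<bar> \<le> B"
  shows "\<exists>r. strict_mono r \<and> (\<forall>x\<in>A. convergent (\<lambda>k. f (r k) x))"
  using assms
proof (induction A rule: finite_induct)
  case empty
  then show ?case by (intro exI[of _ id]) (auto simp: strict_mono_def)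
next
  case (insert a A)
  then obtain r where r: "strict_mono r" "\<forall>x\<in>A. convergent (\<lambda>k. f (r k) x)" by auto
  obtain g where g: "strict_mono g" "monoseq (\<lambda>k. f (r (g k)) a)"
    using seq_monosub[of "\<lambda>k. f (r k) a"] by auto
  have "Bseq (\<lambda>k. f (r (g k)) a)"
    using insert.prems by (intro BseqI'[of _ B]) auto
  hence ca: "convergent (\<lambda>k. f (r (g k)) a)" using g(2) Bseq_monoseq_convergent by blast
  have "\<forall>x\<in>A. convergent (\<lambda>k. f (r (g k)) x)"
  proof
    fix x assume "x \<in> A"
    hence "convergent (\<lambda>k. f (r k) x)" using r by auto
    then obtain L where "(\<lambda>k. f (r k) x) \<longlonglongrightarrow> L" by (auto simp: convergent_def)
    hence "(\<lambda>k. f (r (g k)) x) \<longlonglongrightarrow> L" using LIMSEQ_subseq_LIMSEQ[OF _ g(1)] by (auto simp: o_def)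
    thus "convergent (\<lambda>k. f (r (g k)) x)" by (auto simp: convergent_def)
  qed
  moreover have "strict_mono (\<lambda>k. r (g k))" using strict_mono_o[OF r(1) g(1)] by (simp add: o_def)
  ultimately show ?case using ca by (intro exI[of _ "\<lambda>k. r (g k)"]) auto
qed

lemma tendsto_Max_image:
  fixes f :: "nat \<Rightarrow> 'a \<Rightarrow> real"
  assumes "finite A" "A \<noteq> {}" "\<And>x. x \<in> A \<Longrightarrow> (\<lambda>k. f k x) \<longlonglongrightarrow> l x"
  shows "(\<lambda>k. Max ((f k) ` A)) \<longlonglongrightarrow> Max (l ` A)"
  using assms
proof (induction A rule: finite_ne_induct)
  case (singleton x)
  then show ?case by simp
next
  case (insert x A)
  have "(\<lambda>k. max (f k x) (Max ((f k) ` A))) \<longlonglongrightarrow> max (l x) (Max (l ` A))"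
    using insert by (intro tendsto_max) auto
  thus ?case using insert by simp
qed

lemma limit_disj:
  fixes a b c d :: "nat \<Rightarrow> real"
  assumes "\<And>k. a k \<le> b k \<or> c k \<le> d k"
    "a \<longlonglongrightarrow> A" "b \<longlonglongrightarrow> B" "c \<longlonglongrightarrow> C" "d \<longlonglongrightarrow> D"
  shows "A \<le> B \<or> C \<le> D"
proof -
  have "(\<lambda>k. min (a k - b k) (c k - d k)) \<longlonglongrightarrow> min (A - B) (C - D)"
    using assms by (intro tendsto_min tendsto_diff) auto
  moreover have "min (a k - b k) (c k - d k) \<le> 0" for k using assms(1)[of k] by (auto simp: min_def)
  ultimately have "min (A - B) (C - D) \<le> 0" by (intro LIMSEQ_le_const2) auto
  thus ?thesis by (auto simp: min_def split: if_splits)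
qed

lemma limit_le:
  fixes a b :: "nat \<Rightarrow> real"
  assumes "\<And>k. a k \<le> b k" "a \<longlonglongrightarrow> A" "b \<longlonglongrightarrow> B"
  shows "A \<le> B"
  using assms by (intro LIMSEQ_le[of a A b B]) auto




locale mr =
  fixes n m :: nat and Mp Rd :: "nat \<Rightarrow> nat set" and w r :: "nat \<Rightarrow> real"
    and v :: "nat \<Rightarrow> nat \<Rightarrow> real" and \<beta> E :: real
  assumes inst: "mr_instance n m Mp Rd w r v \<beta> E"
    and pos_work: "\<exists>(i, j) \<in> tasks n Mp Rd. v i j > 0"
begin

abbreviation "TT \<equiv> tasks n Mp Rd"
abbreviation "feas S sp \<equiv> feasible n Mp Rd r v \<beta> E S sp"
abbreviation "obj S sp \<equiv> objective n Mp Rd w v S sp"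
abbreviation "OPT \<equiv> opt_value n Mp Rd w r v \<beta> E"

lemma beta: "\<beta> > 1" and Epos: "E > 0" using inst by (auto simp: mr_instance_def)

lemma job: "j < n \<Longrightarrow> w j > 0 \<and> r j \<ge> 0 \<and> Mp j \<noteq> {} \<and> Rd j \<noteq> {} \<and>
            Mp j \<subseteq> {..<m} \<and> Rd j \<subseteq> {..<m} \<and> Mp j \<inter> Rd j = {}"
  using inst by (auto simp: mr_instance_def)

lemma vnonneg: "(i, j) \<in> TT \<Longrightarrow> v i j \<ge> 0"
  using inst by (auto simp: mr_instance_def)

lemma TT_iff: "(i, j) \<in> TT \<longleftrightarrow> j < n \<and> i \<in> Mp j \<union> Rd j"
  by (simp add: tasks_def)

lemma finT: "finite TT"
proof -
  have "TT \<subseteq> {..<m} \<times> {..<n}" using job by (auto simp: tasks_def)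
  thus ?thesis by (rule finite_subset) auto
qed

lemma npos: "n > 0" using pos_work by (auto simp: tasks_def)

lemma TT_ne: "TT \<noteq> {}" using pos_work by auto

lemma finJ: "j < n \<Longrightarrow> finite (Mp j \<union> Rd j)"
  using job[of j] by (meson finite_Un finite_lessThan finite_subset)

lemma JT: "j < n \<Longrightarrow> i \<in> Mp j \<union> Rd j \<Longrightarrow> (i, j) \<in> TT" by (simp add: TT_iff)

definition "Vpos = {v i j | i j. (i, j) \<in> TT \<and> v i j > 0}"

lemma Vpos_fin: "finite Vpos"
proof -
  have "Vpos \<subseteq> (\<lambda>(i, j). v i j) ` TT" by (auto simp: Vpos_def)
  thus ?thesis using finT finite_subset by blast
qed

lemma Vpos_ne: "Vpos \<noteq> {}" using pos_work by (auto simp: Vpos_def)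

lemma vmin_def': "v_min n Mp Rd v = Min Vpos" by (simp add: v_min_def Vpos_def)

lemma vmin_pos: "v_min n Mp Rd v > 0"
  unfolding vmin_def' using Vpos_fin Vpos_ne by (auto simp: Vpos_def)

lemma vmin_le: "(i, j) \<in> TT \<Longrightarrow> v i j > 0 \<Longrightarrow> v_min n Mp Rd v \<le> v i j"
  unfolding vmin_def' using Vpos_fin by (intro Min_le) (auto simp: Vpos_def)

lemma feasD:
  assumes "feas S sp" "(i, j) \<in> TT"
  shows "sp i j > 0" "S i j \<ge> r j" "S i j \<ge> 0" "v i j / sp i j \<ge> 0"
    "task_completion v S sp i j \<ge> S i j"
proof -
  show a: "sp i j > 0" "S i j \<ge> r j" using assms by (auto simp: feasible_def)
  have "j < n" using assms(2) by (simp add: TT_iff)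
  thus "S i j \<ge> 0" using a job[of j] by auto
  show "v i j / sp i j \<ge> 0" using a vnonneg[OF assms(2)] by simp
  thus "task_completion v S sp i j \<ge> S i j" by (simp add: task_completion_def)
qed

lemma energy_le:
  assumes "feas S sp" "(i, j) \<in> TT"
  shows "v i j * sp i j powr (\<beta> - 1) \<le> E"
proof -
  have "v i j * sp i j powr (\<beta> - 1) = (\<lambda>(i, j). v i j * sp i j powr (\<beta> - 1)) (i, j)" by simp
  also have "\<dots> \<le> (\<Sum>(i, j) \<in> TT. v i j * sp i j powr (\<beta> - 1))"
    using assms vnonneg by (intro member_le_sum finT) auto
  also have "\<dots> \<le> E" using assms by (simp add: feasible_def)
  finally show ?thesis .
qed

lemma speed_le_sU:
  assumes "feas S sp" "(i, j) \<in> TT" "v i j > 0"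
  shows "sp i j \<le> s_U n Mp Rd v \<beta> E"
proof -
  have sp: "sp i j > 0" using feasD assms by auto
  have "v_min n Mp Rd v * sp i j powr (\<beta> - 1) \<le> v i j * sp i j powr (\<beta> - 1)"
    using vmin_le[OF assms(2,3)] by (intro mult_right_mono) auto
  also have "\<dots> \<le> E" by (rule energy_le[OF assms(1,2)])
  finally have "sp i j powr (\<beta> - 1) \<le> E / v_min n Mp Rd v"
    using vmin_pos by (simp add: field_simps)
  hence "(sp i j powr (\<beta> - 1)) powr (1 / (\<beta> - 1)) \<le> (E / v_min n Mp Rd v) powr (1 / (\<beta> - 1))"
    using beta by (intro powr_mono2) auto
  also have "(sp i j powr (\<beta> - 1)) powr (1 / (\<beta> - 1)) = sp i j"
    using beta sp by (simp add: powr_powr)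
  finally show ?thesis by (simp add: s_U_def)
qed

lemma jc_ge:
  assumes "j < n" "i \<in> Mp j \<union> Rd j"
  shows "job_completion Mp Rd v S sp j \<ge> task_completion v S sp i j"
  unfolding job_completion_def using assms finJ by (intro Max_ge) auto

lemma jc_nonneg:
  assumes "feas S sp" "j < n"
  shows "job_completion Mp Rd v S sp j \<ge> 0"
proof -
  obtain i where i: "i \<in> Mp j" using job[OF assms(2)] by auto
  hence "(i, j) \<in> TT" using assms(2) by (simp add: TT_iff)
  hence "task_completion v S sp i j \<ge> 0" using feasD[OF assms(1)] by force
  moreover have "task_completion v S sp i j \<le> job_completion Mp Rd v S sp j"
    using jc_ge[OF assms(2)] i by blast
  ultimately show ?thesis by linarith
qed

lemma obj_nonneg: assumes "feas S sp" shows "obj S sp \<ge> 0"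
  unfolding objective_def
proof (rule sum_nonneg)
  fix x assume "x \<in> {..<n}"
  thus "0 \<le> w x * job_completion Mp Rd v S sp x"
    using jc_nonneg[OF assms] job by (meson lessThan_iff less_imp_le mult_nonneg_nonneg)
qed

lemma wjc_le_obj:
  assumes "feas S sp" "j < n"
  shows "w j * job_completion Mp Rd v S sp j \<le> obj S sp"
  unfolding objective_def
proof (rule member_le_sum)
  show "0 \<le> w x * job_completion Mp Rd v S sp x" if "x \<in> {..<n} - {j}" for x
    using that jc_nonneg[OF assms(1)] job by (meson Diff_iff lessThan_iff less_imp_le mult_nonneg_nonneg)
qed (use assms in auto)

definition "wmin = Min (w ` {..<n})"
definition "wmax = Max (w ` {..<n})"
definition "rmax = Max (r ` {..<n})"
definition "vmax = Max ((\<lambda>(i, j). v i j) ` TT)"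

lemma wmin_pos: "wmin > 0" unfolding wmin_def using npos job by (subst Min_gr_iff) auto
lemma wmin_le: "j < n \<Longrightarrow> wmin \<le> w j" unfolding wmin_def by (intro Min_le) auto
lemma wmax_ge: "j < n \<Longrightarrow> w j \<le> wmax" unfolding wmax_def by (intro Max_ge) auto
lemma rmax_ge: "j < n \<Longrightarrow> r j \<le> rmax" unfolding rmax_def by (intro Max_ge) auto
lemma rmax_nonneg: "rmax \<ge> 0" using rmax_ge[of 0] job[of 0] npos by auto
lemma vmax_ge: "(i, j) \<in> TT \<Longrightarrow> v i j \<le> vmax" unfolding vmax_def using finT by (intro Max_ge) force+
lemma vmax_pos: "vmax > 0" using pos_work vmax_ge by fastforce

lemma tc_le_obj:
  assumes "feas S sp" "(i, j) \<in> TT"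
  shows "task_completion v S sp i j \<le> obj S sp / wmin"
proof -
  have j: "j < n" "i \<in> Mp j \<union> Rd j" using assms(2) by (auto simp: TT_iff)
  have "wmin * task_completion v S sp i j \<le> w j * job_completion Mp Rd v S sp j"
    using wmin_le[OF j(1)] wmin_pos jc_ge[OF j] feasD[OF assms] by (intro mult_mono) auto
  also have "\<dots> \<le> obj S sp" by (rule wjc_le_obj[OF assms(1) j(1)])
  finally show ?thesis using wmin_pos by (simp add: field_simps)
qed

end



lemma sum_lin: "(\<Sum>j<N. a + (2 * real j + 2) * b) = real N * a + real N * (real N + 1) * b"
  by (induction N) (auto simp: algebra_simps)

context mr begin

definition "dd = (real (card TT) * vmax powr \<beta> / E) powr (1 / (\<beta> - 1))"
definition "s0 = vmax / dd"
definition "S0 i j = rmax + (2 * real j + (if i \<in> Mp j then 0 else 1)) * dd"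

lemma cardT_pos: "real (card TT) > 0" using finT TT_ne by (simp add: card_gt_0_iff)

lemma dd_pos: "dd > 0"
  unfolding dd_def using cardT_pos vmax_pos Epos by simp

lemma dd_pow: "dd powr (\<beta> - 1) = real (card TT) * vmax powr \<beta> / E"
  unfolding dd_def using cardT_pos vmax_pos Epos beta by (simp add: powr_powr)

lemma s0_pos: "s0 > 0" using vmax_pos dd_pos by (simp add: s0_def)

lemma s0_pow: "s0 powr (\<beta> - 1) = E / (real (card TT) * vmax)"
proof -
  have "s0 powr (\<beta> - 1) = vmax powr (\<beta> - 1) / dd powr (\<beta> - 1)"
    unfolding s0_def using vmax_pos dd_pos by (simp add: powr_divide)
  also have "vmax powr \<beta> = vmax powr (\<beta> - 1) * vmax"
    using vmax_pos powr_add[of vmax "\<beta> - 1" 1] by simp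
  ultimately show ?thesis using dd_pow cardT_pos vmax_pos Epos
    by (simp add: field_simps)
qed

lemma dur0: "(i, j) \<in> TT \<Longrightarrow> v i j / s0 \<le> dd"
proof -
  assume a: "(i, j) \<in> TT"
  have "v i j / s0 = v i j * dd / vmax" unfolding s0_def using dd_pos vmax_pos by simp
  also have "\<dots> \<le> vmax * dd / vmax"
    using vmax_ge[OF a] dd_pos vmax_pos by (intro divide_right_mono mult_right_mono) auto
  finally show ?thesis using vmax_pos by simp
qed

lemma S0_bounds: "rmax + 2 * real j * dd \<le> S0 i j" "S0 i j \<le> rmax + (2 * real j + 1) * dd"
  unfolding S0_def using dd_pos by (auto simp: algebra_simps)

lemma tc0: "(i, j) \<in> TT \<Longrightarrow> task_completion v S0 (\<lambda>_ _. s0) i j \<le> S0 i j + dd"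
  using dur0 by (simp add: task_completion_def)

lemma tc0': "(i, j) \<in> TT \<Longrightarrow> task_completion v S0 (\<lambda>_ _. s0) i j \<le> rmax + (2 * real j + 2) * dd"
  using tc0[of i j] S0_bounds(2)[of i j] by (simp add: algebra_simps)

lemma nonov0:
  assumes a: "(i, j) \<in> TT" "(i, j') \<in> TT" "j \<noteq> j'"
  shows "task_completion v S0 (\<lambda>_ _. s0) i j \<le> S0 i j' \<or> task_completion v S0 (\<lambda>_ _. s0) i j' \<le> S0 i j"
proof (cases "j < j'")
  case True
  hence jj: "real j + 1 \<le> real j'" by simp
  hence "rmax + (2 * real j + 2) * dd \<le> rmax + 2 * real j' * dd"
    using mult_right_mono[OF jj, of "2*dd"] dd_pos by (simp add: algebra_simps)
  thus ?thesis using tc0'[OF a(1)] S0_bounds(1)[of j' i] by linarith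
next
  case False
  hence jj: "real j' + 1 \<le> real j" using a(3) by simp
  hence "rmax + (2 * real j' + 2) * dd \<le> rmax + 2 * real j * dd"
    using mult_right_mono[OF jj, of "2*dd"] dd_pos by (simp add: algebra_simps)
  thus ?thesis using tc0'[OF a(2)] S0_bounds(1)[of j i] by linarith
qed

lemma feas0: "feas S0 (\<lambda>_ _. s0)"
  unfolding feasible_def
proof (intro conjI)
  show "\<forall>(i, j)\<in>TT. 0 < s0 \<and> r j \<le> S0 i j"
  proof (clarify)
    fix i j assume a: "(i, j) \<in> TT"
    hence "j < n" by (simp add: TT_iff)
    hence "r j \<le> S0 i j" using rmax_ge[of j] S0_bounds(1)[of j i] dd_pos
      by (smt (verit) of_nat_0_le_iff mult_nonneg_nonneg)
    thus "0 < s0 \<and> r j \<le> S0 i j" using s0_pos by simp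
  qed
  show X: "\<forall>(i, j)\<in>TT. \<forall>(i', j')\<in>TT. i = i' \<and> j \<noteq> j' \<longrightarrow>
      task_completion v S0 (\<lambda>_ _. s0) i j \<le> S0 i j' \<or> task_completion v S0 (\<lambda>_ _. s0) i j' \<le> S0 i j"
    using nonov0 by blast
  show "\<forall>j<n. \<forall>i\<in>Rd j. \<forall>i'\<in>Mp j. task_completion v S0 (\<lambda>_ _. s0) i' j \<le> S0 i j"
  proof (clarify)
    fix j i i' assume a: "j < n" "i \<in> Rd j" "i' \<in> Mp j"
    have "i \<notin> Mp j" using a job[OF a(1)] by auto
    hence "S0 i j = rmax + (2 * real j + 1) * dd" by (simp add: S0_def)
    moreover have "S0 i' j = rmax + 2 * real j * dd" using a by (simp add: S0_def)
    moreover have "task_completion v S0 (\<lambda>_ _. s0) i' j \<le> S0 i' j + dd"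
      using a by (intro tc0) (simp add: TT_iff)
    ultimately show "task_completion v S0 (\<lambda>_ _. s0) i' j \<le> S0 i j" by (simp add: algebra_simps)
  qed
  have "(\<Sum>(i, j)\<in>TT. v i j * s0 powr (\<beta> - 1)) \<le> (\<Sum>(i, j)\<in>TT. E / real (card TT))"
  proof (rule sum_mono, clarify)
    fix i j assume a: "(i, j) \<in> TT"
    have "v i j * s0 powr (\<beta> - 1) = v i j * E / (real (card TT) * vmax)" by (simp add: s0_pow)
    also have "\<dots> \<le> vmax * E / (real (card TT) * vmax)"
      using vmax_ge[OF a] Epos cardT_pos vmax_pos
      by (intro divide_right_mono mult_right_mono) auto
    also have "\<dots> = E / real (card TT)" using vmax_pos by simp
    finally show "v i j * s0 powr (\<beta> - 1) \<le> E / real (card TT)" .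
  qed
  also have "\<dots> = E" using cardT_pos by simp
  finally show "(\<Sum>(i, j)\<in>TT. v i j * s0 powr (\<beta> - 1)) \<le> E" .
qed

lemma obj0: "obj S0 (\<lambda>_ _. s0) \<le> wmin * t_max n Mp Rd w r v \<beta> E"
proof -
  have "obj S0 (\<lambda>_ _. s0) \<le> (\<Sum>j<n. wmax * (rmax + (2 * real j + 2) * dd))"
    unfolding objective_def
  proof (rule sum_mono)
    fix j assume j: "j \<in> {..<n}"
    have "job_completion Mp Rd v S0 (\<lambda>_ _. s0) j \<le> rmax + (2 * real j + 2) * dd"
      unfolding job_completion_def using j finJ[of j] job[of j]
      by (subst Max_le_iff) (auto intro!: tc0' simp: TT_iff)
    thus "w j * job_completion Mp Rd v S0 (\<lambda>_ _. s0) j \<le> wmax * (rmax + (2 * real j + 2) * dd)"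
      using wmax_ge[of j] j jc_nonneg[OF feas0, of j] job[of j]
      by (intro mult_mono) auto
  qed
  also have "\<dots> = wmax * (real n * rmax + real n * (real n + 1) * dd)"
    by (simp add: sum_distrib_left[symmetric] sum_lin)
  also have "\<dots> = wmin * t_max n Mp Rd w r v \<beta> E"
    unfolding t_max_def Let_def dd_def wmin_def[symmetric] wmax_def[symmetric] rmax_def[symmetric] vmax_def[symmetric]
    using wmin_pos by simp
  finally show ?thesis .
qed

lemma bdd: "bdd_below {obj S sp | S sp. feas S sp}"
  using obj_nonneg by (intro bdd_belowI[of _ 0]) auto

lemma OPT_le: "OPT \<le> obj S sp" if "feas S sp"
  unfolding opt_value_def using that by (intro cInf_lower[OF _ bdd]) auto

lemma OPT_nonneg: "OPT \<ge> 0"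
  unfolding opt_value_def using feas0 obj_nonneg by (intro cInf_greatest) auto

lemma OPT_tmax: "OPT \<le> wmin * t_max n Mp Rd w r v \<beta> E"
  using OPT_le[OF feas0] obj0 by linarith

end



context mr begin

definition "normsp sp i j = (if v i j = 0 then 1 else sp i j)"

lemma tc_norm: "task_completion v S (normsp sp) = task_completion v S sp"
  by (intro ext) (simp add: task_completion_def normsp_def)

lemma feas_norm: assumes "feas S sp" shows "feas S (normsp sp)"
proof -
  have "(\<Sum>(i, j)\<in>TT. v i j * normsp sp i j powr (\<beta> - 1)) = (\<Sum>(i, j)\<in>TT. v i j * sp i j powr (\<beta> - 1))"
    by (intro sum.cong) (auto simp: normsp_def)
  thus ?thesis using assms unfolding feasible_def tc_norm by (auto simp: normsp_def)
qed

lemma obj_norm: "obj S (normsp sp) = obj S sp"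
  unfolding objective_def job_completion_def tc_norm ..

lemma exists_near: assumes "e > 0" shows "\<exists>S sp. feas S sp \<and> obj S sp < OPT + e"
proof -
  have ne: "{obj S sp | S sp. feas S sp} \<noteq> {}" using feas0 by auto
  have "Inf {obj S sp | S sp. feas S sp} < OPT + e" using assms by (simp add: opt_value_def)
  then obtain x where "x \<in> {obj S sp | S sp. feas S sp}" "x < OPT + e"
    using cInf_less_iff[OF ne bdd] by blast
  thus ?thesis by auto
qed

lemma attain: "\<exists>S sp. feas S sp \<and> obj S sp \<le> OPT"
proof -
  have "\<forall>k. \<exists>S sp. feas S sp \<and> obj S sp < OPT + inverse (real (Suc k))"
    using exists_near by simp
  then obtain Sq spq where q: "\<And>k. feas (Sq k) (spq k) \<and> obj (Sq k) (spq k) < OPT + inverse (real (Suc k))"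
    by metis
  define sq where "sq k = normsp (spq k)" for k
  have fq: "feas (Sq k) (sq k)" for k using q feas_norm by (simp add: sq_def)
  have oq: "obj (Sq k) (sq k) < OPT + inverse (real (Suc k))" for k using q obj_norm by (simp add: sq_def)
  define B where "B = (OPT + 1) / wmin"
  have Bpos: "B > 0" unfolding B_def using OPT_nonneg wmin_pos by simp
  have oq1: "obj (Sq k) (sq k) \<le> OPT + 1" for k
  proof -
    have "inverse (real (Suc k)) \<le> 1" by (simp add: inverse_le_1_iff)
    thus ?thesis using oq[of k] by linarith
  qed
  have tcB: "task_completion v (Sq k) (sq k) i j \<le> B" if "(i, j) \<in> TT" for k i j
  proof -
    have "task_completion v (Sq k) (sq k) i j \<le> obj (Sq k) (sq k) / wmin" by (rule tc_le_obj[OF fq that])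
    also have "\<dots> \<le> B" unfolding B_def using oq1[of k] wmin_pos by (intro divide_right_mono) auto
    finally show ?thesis .
  qed
  have SB: "\<bar>Sq k i j\<bar> \<le> B" if "(i, j) \<in> TT" for k i j
    using tcB[OF that, of k] feasD[OF fq that, of k] by auto
  define a where "a = min 1 (v_min n Mp Rd v / B)"
  define U where "U = max 1 (s_U n Mp Rd v \<beta> E)"
  have apos: "a > 0" unfolding a_def using vmin_pos Bpos by simp
  have spb: "a \<le> sq k i j \<and> sq k i j \<le> U" if t: "(i, j) \<in> TT" for k i j
  proof (cases "v i j = 0")
    case True thus ?thesis by (simp add: sq_def normsp_def a_def U_def)
  next
    case False
    hence vp: "v i j > 0" using vnonneg[OF t] by simp
    have sp: "sq k i j > 0" using feasD[OF fq t] by simp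
    have "v i j / sq k i j \<le> B" using tcB[OF t, of k] feasD[OF fq t, of k]
      by (simp add: task_completion_def)
    hence "v i j \<le> B * sq k i j" using sp by (simp add: field_simps)
    hence "v_min n Mp Rd v \<le> B * sq k i j" using vmin_le[OF t vp] by linarith
    hence "v_min n Mp Rd v / B \<le> sq k i j" using Bpos by (simp add: field_simps)
    moreover have "sq k i j \<le> s_U n Mp Rd v \<beta> E" using speed_le_sU[OF fq t vp] .
    ultimately show ?thesis unfolding a_def U_def by auto
  qed
  obtain r1 where r1: "strict_mono r1" "\<forall>p\<in>TT. convergent (\<lambda>k. (\<lambda>k (i, j). Sq k i j) (r1 k) p)"
    using finite_bolzano[OF finT, of "\<lambda>k (i, j). Sq k i j" B] SB by fastforce
  have absU: "\<bar>sq k i j\<bar> \<le> U" if "(i, j) \<in> TT" for k i j using spb[OF that, of k] apos by auto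
  obtain r2 where r2: "strict_mono r2" "\<forall>p\<in>TT. convergent (\<lambda>k. (\<lambda>k (i, j). sq (r1 k) i j) (r2 k) p)"
    using finite_bolzano[OF finT, of "\<lambda>k (i, j). sq (r1 k) i j" U] absU by fastforce
  define R where "R k = r1 (r2 k)" for k
  have Rmono: "strict_mono R" unfolding R_def using strict_mono_o[OF r1(1) r2(1)] by (simp add: o_def)
  define Sl where "Sl i j = lim (\<lambda>k. Sq (r1 k) i j)" for i j
  define spl where "spl i j = lim (\<lambda>k. sq (R k) i j)" for i j
  have cS: "(\<lambda>k. Sq (R k) i j) \<longlonglongrightarrow> Sl i j" if t: "(i, j) \<in> TT" for i j
  proof -
    have "(\<lambda>k. Sq (r1 k) i j) \<longlonglongrightarrow> Sl i j"
      using r1(2) t unfolding Sl_def by (auto simp: convergent_LIMSEQ_iff)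
    from LIMSEQ_subseq_LIMSEQ[OF this r2(1)] show ?thesis by (simp add: R_def o_def)
  qed
  have csp: "(\<lambda>k. sq (R k) i j) \<longlonglongrightarrow> spl i j" if t: "(i, j) \<in> TT" for i j
    using r2(2) t unfolding spl_def R_def by (auto simp: convergent_LIMSEQ_iff)
  have spl_a: "spl i j \<ge> a" if t: "(i, j) \<in> TT" for i j
    using csp[OF t] spb[OF t] by (intro LIMSEQ_le_const) auto
  have ctc: "(\<lambda>k. task_completion v (Sq (R k)) (sq (R k)) i j) \<longlonglongrightarrow> task_completion v Sl spl i j"
    if t: "(i, j) \<in> TT" for i j
    unfolding task_completion_def using cS[OF t] csp[OF t] spl_a[OF t] apos
    by (intro tendsto_intros) auto
  have feasl: "feas Sl spl"
    unfolding feasible_def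
  proof (intro conjI)
    show "\<forall>(i, j)\<in>TT. 0 < spl i j \<and> r j \<le> Sl i j"
    proof (clarify)
      fix i j assume t: "(i, j) \<in> TT"
      have "r j \<le> Sl i j" using cS[OF t] feasD(2)[OF fq t] by (intro LIMSEQ_le_const) auto
      thus "0 < spl i j \<and> r j \<le> Sl i j" using spl_a[OF t] apos by simp
    qed
    have "task_completion v Sl spl i j \<le> Sl i j' \<or> task_completion v Sl spl i j' \<le> Sl i j"
      if t: "(i, j) \<in> TT" "(i, j') \<in> TT" "j \<noteq> j'" for i j j'
    proof (rule limit_disj[OF _ ctc[OF t(1)] cS[OF t(2)] ctc[OF t(2)] cS[OF t(1)]])
      fix k
      show "task_completion v (Sq (R k)) (sq (R k)) i j \<le> Sq (R k) i j' \<or>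
            task_completion v (Sq (R k)) (sq (R k)) i j' \<le> Sq (R k) i j"
        using fq[of "R k"] t unfolding feasible_def by blast
    qed
    thus "\<forall>(i, j)\<in>TT. \<forall>(i', j')\<in>TT. i = i' \<and> j \<noteq> j' \<longrightarrow>
      task_completion v Sl spl i j \<le> Sl i j' \<or> task_completion v Sl spl i j' \<le> Sl i j" by blast
    have "task_completion v Sl spl i' j \<le> Sl i j" if t: "j < n" "i \<in> Rd j" "i' \<in> Mp j" for j i i'
    proof (rule limit_le[OF _ ctc cS])
      fix k show "task_completion v (Sq (R k)) (sq (R k)) i' j \<le> Sq (R k) i j"
        using fq[of "R k"] t unfolding feasible_def by blast
    qed (use t in \<open>auto simp: TT_iff\<close>)
    thus "\<forall>j<n. \<forall>i\<in>Rd j. \<forall>i'\<in>Mp j. task_completion v Sl spl i' j \<le> Sl i j" by blast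
    have "(\<lambda>k. \<Sum>p\<in>TT. v (fst p) (snd p) * sq (R k) (fst p) (snd p) powr (\<beta> - 1))
         \<longlonglongrightarrow> (\<Sum>p\<in>TT. v (fst p) (snd p) * spl (fst p) (snd p) powr (\<beta> - 1))"
    proof (rule tendsto_sum)
      fix p assume p: "p \<in> TT"
      obtain i j where pij: "p = (i, j)" by force
      show "(\<lambda>k. v (fst p) (snd p) * sq (R k) (fst p) (snd p) powr (\<beta> - 1))
         \<longlonglongrightarrow> v (fst p) (snd p) * spl (fst p) (snd p) powr (\<beta> - 1)"
        using csp[of i j] spl_a[of i j] apos p pij by (auto intro!: tendsto_intros)
    qed
    moreover have "(\<Sum>p\<in>TT. v (fst p) (snd p) * sq (R k) (fst p) (snd p) powr (\<beta> - 1)) \<le> E" for k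
      using fq[of "R k"] unfolding feasible_def by (simp add: case_prod_beta)
    ultimately have "(\<Sum>p\<in>TT. v (fst p) (snd p) * spl (fst p) (snd p) powr (\<beta> - 1)) \<le> E"
      by (intro LIMSEQ_le_const2) auto
    thus "(\<Sum>(i, j)\<in>TT. v i j * spl i j powr (\<beta> - 1)) \<le> E" by (simp add: case_prod_beta)
  qed
  have cobj: "(\<lambda>k. obj (Sq (R k)) (sq (R k))) \<longlonglongrightarrow> obj Sl spl"
    unfolding objective_def job_completion_def
  proof (intro tendsto_intros)
    fix j assume j: "j \<in> {..<n}"
    show "(\<lambda>k. Max ((\<lambda>i. task_completion v (Sq (R k)) (sq (R k)) i j) ` (Mp j \<union> Rd j)))
          \<longlonglongrightarrow> Max ((\<lambda>i. task_completion v Sl spl i j) ` (Mp j \<union> Rd j))"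
      using j finJ[of j] job[of j] ctc
      by (intro tendsto_Max_image[where f = "\<lambda>k i. task_completion v (Sq (R k)) (sq (R k)) i j"])
         (auto simp: TT_iff)
  qed
  have "obj Sl spl \<le> OPT + 0"
  proof (rule limit_le[OF _ cobj])
    show "(\<lambda>k. OPT + inverse (real (Suc k))) \<longlonglongrightarrow> OPT + 0"
      by (intro tendsto_intros LIMSEQ_inverse_real_of_nat)
    fix k
    have "k \<le> R k" using seq_suble[OF Rmono] by simp
    hence "inverse (real (Suc (R k))) \<le> inverse (real (Suc k))" by (simp add: field_simps)
    thus "obj (Sq (R k)) (sq (R k)) \<le> OPT + inverse (real (Suc k))" using oq[of "R k"] by linarith
  qed
  thus ?thesis using feasl by auto
qed

end



lemma round_level:
  fixes sL sU s \<epsilon> :: real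
  assumes "0 < sL" "sL \<le> s" "s \<le> sU" "\<epsilon> > 0"
  shows "\<exists>l::nat. int l \<le> \<lceil>log (1 + \<epsilon>) (sU / sL)\<rceil> \<and> sL * (1 + \<epsilon>) ^ l \<le> s \<and> s \<le> (1 + \<epsilon>) * (sL * (1 + \<epsilon>) ^ l)"
proof -
  define b where "b = 1 + \<epsilon>"
  have b1: "b > 1" using assms by (simp add: b_def)
  define x where "x = log b (s / sL)"
  have q: "s / sL \<ge> 1" using assms by simp
  have x0: "x \<ge> 0" unfolding x_def using b1 q by simp
  define l where "l = nat \<lfloor>x\<rfloor>"
  have lx: "real l \<le> x" "x < real l + 1" unfolding l_def using x0 by linarith+
  have bx: "b powr x = s / sL" unfolding x_def using b1 q by simp
  have "b ^ l = b powr real l" using b1 by (simp add: powr_realpow)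
  also have "\<dots> \<le> b powr x" using b1 lx by simp
  finally have A: "b ^ l \<le> s / sL" using bx by simp
  have "s / sL = b powr x" using bx by simp
  also have "\<dots> \<le> b powr (real l + 1)" using b1 lx by simp
  also have "\<dots> = b ^ (l + 1)" using b1 powr_realpow[of b "Suc l"] by (simp add: add.commute)
  finally have Bq: "s / sL \<le> b * b ^ l" by simp
  have "x \<le> log b (sU / sL)" unfolding x_def using b1 q assms by (subst log_le_cancel_iff) (auto intro: divide_right_mono)
  hence xy: "x \<le> log b (sU / sL)" .
  have il: "int l = \<lfloor>x\<rfloor>" using x0 by (simp add: l_def)
  have "real_of_int \<lfloor>x\<rfloor> \<le> real_of_int \<lceil>log b (sU / sL)\<rceil>"
    using xy of_int_floor_le[of x] le_of_int_ceiling[of "log b (sU / sL)"] by linarith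
  hence "int l \<le> \<lceil>log b (sU / sL)\<rceil>" unfolding il by (simp only: of_int_le_iff)
  moreover have "sL * b ^ l \<le> s" using A assms by (simp add: field_simps)
  moreover have "s \<le> b * (sL * b ^ l)" using Bq assms by (simp add: field_simps)
  ultimately show ?thesis unfolding b_def by blast
qed

context mr begin

lemma tmax_eq: "t_max n Mp Rd w r v \<beta> E = wmax / wmin * (real n * rmax + real n * (real n + 1) * dd)"
  unfolding t_max_def Let_def dd_def wmin_def[symmetric] wmax_def[symmetric] rmax_def[symmetric] vmax_def[symmetric]
  by simp

lemma tmax_pos: "t_max n Mp Rd w r v \<beta> E > 0"
proof -
  have "wmax > 0" using wmax_ge[of 0] job[of 0] npos by auto
  moreover have "real n * rmax + real n * (real n + 1) * dd > 0"
    using npos rmax_nonneg dd_pos by (intro add_nonneg_pos) auto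
  ultimately show ?thesis unfolding tmax_eq using wmin_pos by simp
qed

lemma sL_pos: "s_L n Mp Rd w r v \<beta> E > 0"
  unfolding s_L_def using vmin_pos tmax_pos by simp

lemma final:
  assumes eps: "\<epsilon> > 0"
  shows "\<exists>S sp. feasible n Mp Rd r v \<beta> E S sp \<and>
           (\<forall>(i, j) \<in> tasks n Mp Rd. sp i j \<in> speed_set \<epsilon> n Mp Rd w r v \<beta> E) \<and>
           objective n Mp Rd w v S sp \<le> (1 + \<epsilon>) * opt_value n Mp Rd w r v \<beta> E"
proof -
  obtain S sp where f: "feas S sp" and o: "obj S sp \<le> OPT" using attain by blast
  define sL where "sL = s_L n Mp Rd w r v \<beta> E"
  define sU where "sU = s_U n Mp Rd v \<beta> E"
  define V where "V = speed_set \<epsilon> n Mp Rd w r v \<beta> E"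
  have sLp: "sL > 0" using sL_pos by (simp add: sL_def)
  have Vpos: "x \<in> V \<Longrightarrow> x > 0" for x using sLp eps unfolding V_def speed_set_def sL_def by auto
  have spr: "sL \<le> sp i j \<and> sp i j \<le> sU" if t: "(i, j) \<in> TT" and vp: "v i j > 0" for i j
  proof -
    have sp: "sp i j > 0" using feasD[OF f t] by simp
    have "v i j / sp i j \<le> task_completion v S sp i j" using feasD[OF f t] by (simp add: task_completion_def)
    also have "\<dots> \<le> obj S sp / wmin" by (rule tc_le_obj[OF f t])
    also have "\<dots> \<le> OPT / wmin" using o wmin_pos by (intro divide_right_mono) auto
    also have "\<dots> \<le> t_max n Mp Rd w r v \<beta> E" using OPT_tmax wmin_pos by (simp add: field_simps)
    finally have "v i j \<le> t_max n Mp Rd w r v \<beta> E * sp i j" using sp by (simp add: field_simps)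
    hence "v_min n Mp Rd v \<le> t_max n Mp Rd w r v \<beta> E * sp i j" using vmin_le[OF t vp] by linarith
    hence "sL \<le> sp i j" unfolding sL_def s_L_def using tmax_pos by (simp add: field_simps)
    thus ?thesis using speed_le_sU[OF f t vp] by (simp add: sU_def)
  qed
  have ex: "\<exists>x. x \<in> V \<and> x \<le> sp i j \<and> sp i j \<le> (1 + \<epsilon>) * x" if t: "(i, j) \<in> TT" and vp: "v i j > 0" for i j
  proof -
    obtain l :: nat where l: "int l \<le> \<lceil>log (1 + \<epsilon>) (sU / sL)\<rceil>" "sL * (1 + \<epsilon>) ^ l \<le> sp i j"
      "sp i j \<le> (1 + \<epsilon>) * (sL * (1 + \<epsilon>) ^ l)"
      using round_level[OF sLp _ _ eps, of "sp i j" sU] spr[OF t vp] by blast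
    have "sL * (1 + \<epsilon>) ^ l \<in> V"
      unfolding V_def speed_set_def k_param_def using l(1) by (auto simp: sL_def sU_def)
    thus ?thesis using l by blast
  qed
  have sLV: "sL \<in> V"
  proof -
    obtain i j where t: "(i, j) \<in> TT" and vp: "v i j > 0" using pos_work by auto
    have "sL \<le> sU" using spr[OF t vp] by linarith
    hence "log (1 + \<epsilon>) (sU / sL) \<ge> 0" using sLp eps by simp
    hence "int 0 \<le> k_param \<epsilon> n Mp Rd w r v \<beta> E" unfolding k_param_def sL_def sU_def by simp
    hence "sL * (1 + \<epsilon>) ^ 0 \<in> V" unfolding V_def speed_set_def sL_def by blast
    thus ?thesis by simp
  qed
  define sp' where "sp' i j = (if (i, j) \<in> TT \<and> v i j > 0
      then (SOME x. x \<in> V \<and> x \<le> sp i j \<and> sp i j \<le> (1 + \<epsilon>) * x) else sL)" for i j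
  define S' where "S' i j = (1 + \<epsilon>) * S i j" for i j
  have sp'p: "sp' i j \<in> V \<and> (v i j > 0 \<longrightarrow> sp' i j \<le> sp i j \<and> sp i j \<le> (1 + \<epsilon>) * sp' i j)"
    if t: "(i, j) \<in> TT" for i j
  proof (cases "v i j > 0")
    case True
    thus ?thesis unfolding sp'_def using someI_ex[OF ex[OF t True]] t by auto
  next
    case False thus ?thesis unfolding sp'_def using sLV by auto
  qed
  have sp'pos: "sp' i j > 0" if t: "(i, j) \<in> TT" for i j using sp'p[OF t] Vpos by blast
  have dur: "v i j / sp' i j \<le> (1 + \<epsilon>) * (v i j / sp i j)" if t: "(i, j) \<in> TT" for i j
  proof (cases "v i j > 0")
    case True
    have sp: "sp i j > 0" using feasD[OF f t] by simp
    have "v i j * sp i j \<le> v i j * ((1 + \<epsilon>) * sp' i j)"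
      using sp'p[OF t] True by (intro mult_left_mono) auto
    thus ?thesis using sp sp'pos[OF t] by (simp add: field_simps)
  next
    case False hence "v i j = 0" using vnonneg[OF t] by simp
    thus ?thesis by simp
  qed
  have tc': "task_completion v S' sp' i j \<le> (1 + \<epsilon>) * task_completion v S sp i j"
    if t: "(i, j) \<in> TT" for i j
    using dur[OF t] unfolding task_completion_def S'_def by (simp add: algebra_simps)
  have feas': "feas S' sp'"
    unfolding feasible_def
  proof (intro conjI)
    show "\<forall>(i, j)\<in>TT. 0 < sp' i j \<and> r j \<le> S' i j"
    proof clarify
      fix i j assume t: "(i, j) \<in> TT"
      have "S i j \<le> S' i j" unfolding S'_def using feasD(3)[OF f t] eps by (simp add: algebra_simps)
      thus "0 < sp' i j \<and> r j \<le> S' i j" using sp'pos[OF t] feasD(2)[OF f t] by simp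
    qed
    have "task_completion v S' sp' i j \<le> S' i j' \<or> task_completion v S' sp' i j' \<le> S' i j"
      if t: "(i, j) \<in> TT" "(i, j') \<in> TT" "j \<noteq> j'" for i j j'
    proof -
      have "task_completion v S sp i j \<le> S i j' \<or> task_completion v S sp i j' \<le> S i j"
        using f t unfolding feasible_def by blast
      thus ?thesis using tc'[OF t(1)] tc'[OF t(2)] eps unfolding S'_def
        by (smt (verit) mult_left_mono)
    qed
    thus "\<forall>(i, j)\<in>TT. \<forall>(i', j')\<in>TT. i = i' \<and> j \<noteq> j' \<longrightarrow>
      task_completion v S' sp' i j \<le> S' i j' \<or> task_completion v S' sp' i j' \<le> S' i j" by blast
    have "task_completion v S' sp' i' j \<le> S' i j" if t: "j < n" "i \<in> Rd j" "i' \<in> Mp j" for j i i'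
    proof -
      have "task_completion v S sp i' j \<le> S i j" using f t unfolding feasible_def by blast
      moreover have "task_completion v S' sp' i' j \<le> (1 + \<epsilon>) * task_completion v S sp i' j"
        using t by (intro tc') (simp add: TT_iff)
      ultimately show ?thesis unfolding S'_def using eps by (smt (verit) mult_left_mono)
    qed
    thus "\<forall>j<n. \<forall>i\<in>Rd j. \<forall>i'\<in>Mp j. task_completion v S' sp' i' j \<le> S' i j" by blast
    have "(\<Sum>(i, j)\<in>TT. v i j * sp' i j powr (\<beta> - 1)) \<le> (\<Sum>(i, j)\<in>TT. v i j * sp i j powr (\<beta> - 1))"
    proof (rule sum_mono, clarify)
      fix i j assume t: "(i, j) \<in> TT"
      show "v i j * sp' i j powr (\<beta> - 1) \<le> v i j * sp i j powr (\<beta> - 1)"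
      proof (cases "v i j > 0")
        case True
        thus ?thesis using sp'p[OF t] sp'pos[OF t] beta
          by (intro mult_left_mono powr_mono2) auto
      next
        case False hence "v i j = 0" using vnonneg[OF t] by simp
        thus ?thesis by simp
      qed
    qed
    also have "\<dots> \<le> E" using f by (simp add: feasible_def)
    finally show "(\<Sum>(i, j)\<in>TT. v i j * sp' i j powr (\<beta> - 1)) \<le> E" .
  qed
  have "obj S' sp' \<le> (\<Sum>j<n. w j * ((1 + \<epsilon>) * job_completion Mp Rd v S sp j))"
    unfolding objective_def
  proof (rule sum_mono)
    fix j assume j: "j \<in> {..<n}"
    have "job_completion Mp Rd v S' sp' j \<le> (1 + \<epsilon>) * job_completion Mp Rd v S sp j"
      unfolding job_completion_def
    proof (rule Max.boundedI)
      show "finite ((\<lambda>i. task_completion v S' sp' i j) ` (Mp j \<union> Rd j))" using j finJ by simp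
      show "(\<lambda>i. task_completion v S' sp' i j) ` (Mp j \<union> Rd j) \<noteq> {}" using j job by auto
      fix y assume "y \<in> (\<lambda>i. task_completion v S' sp' i j) ` (Mp j \<union> Rd j)"
      then obtain i where i: "i \<in> Mp j \<union> Rd j" and y: "y = task_completion v S' sp' i j" by auto
      have "task_completion v S' sp' i j \<le> (1 + \<epsilon>) * task_completion v S sp i j"
        using i j by (intro tc') (auto simp: TT_iff)
      also have "\<dots> \<le> (1 + \<epsilon>) * Max ((\<lambda>i. task_completion v S sp i j) ` (Mp j \<union> Rd j))"
        using jc_ge[of j i S sp] i j eps unfolding job_completion_def by (intro mult_left_mono) auto
      finally show "y \<le> (1 + \<epsilon>) * Max ((\<lambda>i. task_completion v S sp i j) ` (Mp j \<union> Rd j))" using y by simp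
    qed
    thus "w j * job_completion Mp Rd v S' sp' j \<le> w j * ((1 + \<epsilon>) * job_completion Mp Rd v S sp j)"
      using job[of j] j by (intro mult_left_mono) auto
  qed
  also have "\<dots> = (1 + \<epsilon>) * obj S sp"
    unfolding objective_def by (simp add: sum_distrib_left algebra_simps)
  also have "\<dots> \<le> (1 + \<epsilon>) * OPT" using o eps by (intro mult_left_mono) auto
  finally have "obj S' sp' \<le> (1 + \<epsilon>) * OPT" .
  moreover have "\<forall>(i, j)\<in>TT. sp' i j \<in> V" using sp'p by blast
  ultimately show ?thesis using feas' unfolding V_def by blast
qed

end

theorem lemma1:
  fixes n m :: nat and Mp Rd :: "nat \<Rightarrow> nat set" and w r :: "nat \<Rightarrow> real"
    and v :: "nat \<Rightarrow> nat \<Rightarrow> real" and \<beta> E \<epsilon> :: real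
  assumes inst: "mr_instance n m Mp Rd w r v \<beta> E"
    and pos_work: "\<exists>(i, j) \<in> tasks n Mp Rd. v i j > 0"
    and eps: "\<epsilon> > 0"
  shows "\<exists>S sp. feasible n Mp Rd r v \<beta> E S sp \<and>
           (\<forall>(i, j) \<in> tasks n Mp Rd. sp i j \<in> speed_set \<epsilon> n Mp Rd w r v \<beta> E) \<and>
           objective n Mp Rd w v S sp \<le> (1 + \<epsilon>) * opt_value n Mp Rd w r v \<beta> E"
  using mr.final[OF mr.intro[OF inst pos_work] eps] .



end
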